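(* Let $\Phi:\{0,1\}^n\to\{0,1\}^n$ and let $\mu\in\{0,1\}^n$ be a fixed point of $\Phi$. Then: a) $\overline{W}(\mu)=\{\mu'\in\mathbf{B}^n:\exists\rho'\in P_n,\ \lim_{t\to\infty}\Phi^{\rho'}(\mu',t)=\mu\}$ and $\underline{W}(\mu)=\{\mu'\in\mathbf{B}^n:\forall\rho'\in P_n,\ \lim_{t\to\infty}\Phi^{\rho'}(\mu',t)=\mu\}$; b) $\{\mu\}\subset\underline{W}(\mu)\subset\overline{W}(\mu)$; in particular $\mu$ is p-attractive and n-attractive (i.e. $\overline{W}(\mu)\ne\emptyset$ and $\underline{W}(\mu)\neq\emptyset$); c) $\overline{W}(\mu)$ is p-invariant and $\underline{W}(\mu)$ is n-invariant.
   Context: Let $\mathbf{B}=\{0,1\}$ (discrete topology), $n\ge 1$, and $\Phi:\mathbf{B}^n\to\mathbf{B}^n$. For $\nu\in\mathbf{B}^n$ define $\Phi^\nu_i(\mu)=\mu_i$ if $\nu_i=0$ and $\Phi^\nu_i(\mu)=\Phi_i(\mu)$ if $\nu_i=1$. Put $\Phi^{\alpha^0\dots\alpha^k}=\Phi^{\alpha^k}\circ\cdots\circ\Phi^{\alpha^0}$. A sequence $(\alpha^k)_{k\in\mathbf{N}}$ in $\mathbf{B}^n$ is progressive if each set $\{k:\alpha^k_i=1\}$, $i=1,\dots,n$, is infinite. $Seq$ is the set of strictly increasing real sequences unbounded above. $P_n$ is the set of $\rho:\mathbf{R}\to\mathbf{B}^n$ with $\rho(t_k)=\alpha^k$ and $\rho(t)=0$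 for $t\notin\{t_k\}$, $\alpha$ progressive, $(t_k)\in Seq$. Orbit: $\Phi^\rho(\mu,t)=\mu$ for $t<t_0$, $=\Phi^{\alpha^0\dots\alpha^k}(\mu)$ for $t\in[t_k,t_{k+1})$; $Or_\rho(\mu)=\{\Phi^\rho(\mu,t):t\in\mathbf{R}\}$. For $x:\mathbf{R}\to\mathbf{B}^n$, $\lim_{t\to\infty}x(t)=x(t')$ means there is $t'$ with $x(t)=x(t')$ for all $t\ge t'$. $\omega_\rho(\mu)=\{\mu':\exists(s_k)\in Seq,\ \Phi^\rho(\mu,s_k)=\mu'$ for all large $k\}$. $\overline{W}(\mu)=\{\mu':\exists\rho'\in P_n,\ \omega_{\rho'}(\mu')\subset\{\mu\}\}$, $\underline{W}(\mu)=\{\mu':\forall\rho'\in P_n,\ \omega_{\rho'}(\mu')\subset\{\mu\}\}$. A nonempty set $A\subset\mathbf{B}^n$ is p-invariant if for every $\mu\in A$ there is $\rho\in P_n$ with $Or_\rho(\mu)\subset A$, and n-invariant if for every $\mu\in A$ and every $\rho\in P_n$, $Or_\rho(\mu)\subset A$. *)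

theory Defs
  imports Complex_Main "HOL-Library.Infinite_Set"
begin

text \<open>States of B^n are modelled as functions 'n => bool over a finite index type 'n
  (so n = CARD('n) >= 1); False = 0, True = 1.\<close>

type_synonym 'n state = "'n \<Rightarrow> bool"

definition Phi_nu :: "('n state \<Rightarrow> 'n state) \<Rightarrow> 'n state \<Rightarrow> 'n state \<Rightarrow> 'n state" where
  "Phi_nu \<Phi> \<nu> \<mu> = (\<lambda>i. if \<nu> i then \<Phi> \<mu> i else \<mu> i)"

fun Phi_comp :: "('n state \<Rightarrow> 'n state) \<Rightarrow> (nat \<Rightarrow> 'n state) \<Rightarrow> nat \<Rightarrow> 'n state \<Rightarrow> 'n state" where
  "Phi_comp \<Phi> \<alpha> 0 \<mu> = Phi_nu \<Phi> (\<alpha> 0) \<mu>"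
| "Phi_comp \<Phi> \<alpha> (Suc k) \<mu> = Phi_nu \<Phi> (\<alpha> (Suc k)) (Phi_comp \<Phi> \<alpha> k \<mu>)"

definition progressive :: "(nat \<Rightarrow> 'n state) \<Rightarrow> bool" where
  "progressive \<alpha> \<longleftrightarrow> (\<forall>i. infinite {k. \<alpha> k i})"

definition Seq :: "(nat \<Rightarrow> real) set" where
  "Seq = {t. strict_mono t \<and> (\<forall>M. \<exists>k. t k > M)}"

definition is_rep :: "(real \<Rightarrow> 'n state) \<Rightarrow> (nat \<Rightarrow> 'n state) \<Rightarrow> (nat \<Rightarrow> real) \<Rightarrow> bool" where
  "is_rep \<rho> \<alpha> ts \<longleftrightarrow> progressive \<alpha> \<and> ts \<in> Seq \<and> (\<forall>k. \<rho> (ts k) = \<alpha> k)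
     \<and> (\<forall>x. x \<notin> range ts \<longrightarrow> \<rho> x = (\<lambda>_. False))"

definition P :: "(real \<Rightarrow> 'n state) set" where
  "P = {\<rho>. \<exists>\<alpha> ts. is_rep \<rho> \<alpha> ts}"

definition orbit :: "('n state \<Rightarrow> 'n state) \<Rightarrow> (real \<Rightarrow> 'n state) \<Rightarrow> 'n state \<Rightarrow> real \<Rightarrow> 'n state" where
  "orbit \<Phi> \<rho> \<mu> x =
     (let (\<alpha>, ts) = (SOME p. is_rep \<rho> (fst p) (snd p)) in
      if x < ts 0 then \<mu>
      else Phi_comp \<Phi> \<alpha> (THE k. ts k \<le> x \<and> x < ts (Suc k)) \<mu>)"

definition Or :: "('n state \<Rightarrow> 'n state) \<Rightarrow> (real \<Rightarrow> 'n state) \<Rightarrow> 'n state \<Rightarrow> 'n state set" where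
  "Or \<Phi> \<rho> \<mu> = range (orbit \<Phi> \<rho> \<mu>)"

text \<open>lim_{t->oo} x(t) = v in the paper's sense: x is eventually constant equal to v.\<close>
definition lim_eq :: "(real \<Rightarrow> 'a) \<Rightarrow> 'a \<Rightarrow> bool" where
  "lim_eq x v \<longleftrightarrow> (\<exists>t'. x t' = v \<and> (\<forall>t\<ge>t'. x t = x t'))"

definition omega :: "('n state \<Rightarrow> 'n state) \<Rightarrow> (real \<Rightarrow> 'n state) \<Rightarrow> 'n state \<Rightarrow> 'n state set" where
  "omega \<Phi> \<rho> \<mu> = {\<mu>'. \<exists>s\<in>Seq. \<exists>K. \<forall>k\<ge>K. orbit \<Phi> \<rho> \<mu> (s k) = \<mu>'}"

definition Wbar :: "('n state \<Rightarrow> 'n state) \<Rightarrow> 'n state \<Rightarrow> 'n state set" where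
  "Wbar \<Phi> \<mu> = {\<mu>'. \<exists>\<rho>'\<in>P. omega \<Phi> \<rho>' \<mu>' \<subseteq> {\<mu>}}"

definition Wund :: "('n state \<Rightarrow> 'n state) \<Rightarrow> 'n state \<Rightarrow> 'n state set" where
  "Wund \<Phi> \<mu> = {\<mu>'. \<forall>\<rho>'\<in>P. omega \<Phi> \<rho>' \<mu>' \<subseteq> {\<mu>}}"

definition p_invariant :: "('n state \<Rightarrow> 'n state) \<Rightarrow> 'n state set \<Rightarrow> bool" where
  "p_invariant \<Phi> A \<longleftrightarrow> A \<noteq> {} \<and> (\<forall>\<mu>\<in>A. \<exists>\<rho>\<in>P. Or \<Phi> \<rho> \<mu> \<subseteq> A)"

definition n_invariant :: "('n state \<Rightarrow> 'n state) \<Rightarrow> 'n state set \<Rightarrow> bool" where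
  "n_invariant \<Phi> A \<longleftrightarrow> A \<noteq> {} \<and> (\<forall>\<mu>\<in>A. \<forall>\<rho>\<in>P. Or \<Phi> \<rho> \<mu> \<subseteq> A)"

definition p_attractive :: "('n state \<Rightarrow> 'n state) \<Rightarrow> 'n state \<Rightarrow> bool" where
  "p_attractive \<Phi> \<mu> \<longleftrightarrow> Wbar \<Phi> \<mu> \<noteq> {}"

definition n_attractive :: "('n state \<Rightarrow> 'n state) \<Rightarrow> 'n state \<Rightarrow> bool" where
  "n_attractive \<Phi> \<mu> \<longleftrightarrow> Wund \<Phi> \<mu> \<noteq> {}"

end

theory Submission imports Defs begin

definition supp :: "(real \<Rightarrow> 'n state) \<Rightarrow> real \<Rightarrow> real set" where
  "supp \<rho> x = {y. y \<le> x \<and> \<rho> y \<noteq> (\<lambda>_. False)}"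

definition G :: "('n state \<Rightarrow> 'n state) \<Rightarrow> (real \<Rightarrow> 'n state) \<Rightarrow> 'n state \<Rightarrow> real \<Rightarrow> 'n state" where
  "G \<Phi> \<rho> \<mu> x = fold (\<lambda>s. Phi_nu \<Phi> (\<rho> s)) (sorted_list_of_set (supp \<rho> x)) \<mu>"

lemma sls_eq:
  fixes L :: "real list"
  assumes "sorted_wrt (<) L" "set L = S"
  shows "sorted_list_of_set S = L"
proof -
  have f: "finite S" using assms(2) by auto
  show ?thesis
    by (rule strict_sorted_equal) (use assms f in auto)
qed

lemma Phi_nu_zero: "Phi_nu \<Phi> (\<lambda>_. False) = id"
  by (auto simp: Phi_nu_def)

lemma fold_filter_id:
  assumes "\<And>s. s \<in> set L \<Longrightarrow> \<not> Q s \<Longrightarrow> f s = id"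
  shows "fold f (filter Q L) a = fold f L a"
  using assms by (induction L arbitrary: a) auto

lemma Phi_comp_fold: "Phi_comp \<Phi> \<alpha> k \<mu> = fold (\<lambda>j. Phi_nu \<Phi> (\<alpha> j)) [0..<Suc k] \<mu>"
  by (induction k) auto

lemma Phi_comp_fix: "\<Phi> \<mu> = \<mu> \<Longrightarrow> Phi_comp \<Phi> \<alpha> k \<mu> = \<mu>"
  by (induction k) (auto simp: Phi_nu_def)

lemma rep_idx:
  assumes "is_rep \<rho> \<alpha> ts"
  shows "ts k \<le> x \<longleftrightarrow> k < (LEAST k. x < ts k)"
proof -
  have sm: "strict_mono ts" and ub: "\<exists>k. x < ts k" using assms by (auto simp: is_rep_def Seq_def)
  let ?N = "LEAST k. x < ts k"
  have N: "x < ts ?N" using LeastI_ex[OF ub] .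
  show ?thesis
  proof
    assume "ts k \<le> x"
    show "k < ?N"
    proof (rule ccontr)
      assume "\<not> k < ?N"
      then have "ts ?N \<le> ts k" using sm by (simp add: strict_mono_less_eq)
      then show False using N \<open>ts k \<le> x\<close> by simp
    qed
  next
    assume "k < ?N" then show "ts k \<le> x" using not_less_Least by fastforce
  qed
qed

lemma rep_basic:
  assumes "is_rep \<rho> \<alpha> ts"
  shows "strict_mono ts" "\<And>M. \<exists>k. M < ts k" "\<And>k. \<rho> (ts k) = \<alpha> k"
    "\<And>x. x \<notin> range ts \<Longrightarrow> \<rho> x = (\<lambda>_. False)" "progressive \<alpha>"
  using assms by (auto simp: is_rep_def Seq_def)

lemma supp_eq:
  assumes r: "is_rep \<rho> \<alpha> ts"
  shows "supp \<rho> x = {s \<in> ts ` {..<(LEAST k. x < ts k)}. \<rho> s \<noteq> (\<lambda>_. False)}"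
proof (intro set_eqI iffI)
  have idx: "\<And>k. ts k \<le> x \<longleftrightarrow> k < (LEAST k. x < ts k)" using rep_idx[OF r] by blast
  fix s
  {
    assume "s \<in> supp \<rho> x"
    then have s: "s \<le> x" "\<rho> s \<noteq> (\<lambda>_. False)" by (auto simp: supp_def)
    then have "s \<in> range ts" using rep_basic(4)[OF r] by blast
    then obtain k where k: "s = ts k" by blast
    show "s \<in> {s \<in> ts ` {..<(LEAST k. x < ts k)}. \<rho> s \<noteq> (\<lambda>_. False)}"
      using s k idx[of k] by auto
  }
  {
    assume "s \<in> {s \<in> ts ` {..<(LEAST k. x < ts k)}. \<rho> s \<noteq> (\<lambda>_. False)}"
    then obtain k where "k < (LEAST k. x < ts k)" "s = ts k" "\<rho> s \<noteq> (\<lambda>_. False)" by auto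
    then show "s \<in> supp \<rho> x" using idx[of k] by (auto simp: supp_def)
  }
qed

lemma supp_fin: "is_rep \<rho> \<alpha> ts \<Longrightarrow> finite (supp \<rho> x)"
  by (simp add: supp_eq)

lemma orb_eq:
  assumes r: "is_rep \<rho> \<alpha> ts"
  shows "(if x < ts 0 then \<mu> else Phi_comp \<Phi> \<alpha> (THE k. ts k \<le> x \<and> x < ts (Suc k)) \<mu>) = G \<Phi> \<rho> \<mu> x"
proof -
  let ?N = "LEAST k. x < ts k"
  have idx: "\<And>k. ts k \<le> x \<longleftrightarrow> k < ?N" using rep_idx[OF r] by blast
  have sm: "strict_mono ts" using rep_basic[OF r] by blast
  have "(if x < ts 0 then \<mu> else Phi_comp \<Phi> \<alpha> (THE k. ts k \<le> x \<and> x < ts (Suc k)) \<mu>)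
        = fold (\<lambda>j. Phi_nu \<Phi> (\<alpha> j)) [0..<?N] \<mu>"
  proof (cases "x < ts 0")
    case True
    then have "?N = 0" using idx[of 0] by auto
    then show ?thesis using True by simp
  next
    case False
    then have "?N \<noteq> 0" using idx[of 0] by auto
    then obtain K where K: "?N = Suc K" using not0_implies_Suc by blast
    have "(THE k. ts k \<le> x \<and> x < ts (Suc k)) = K"
    proof (rule the_equality)
      show "ts K \<le> x \<and> x < ts (Suc K)" using idx[of K] idx[of "Suc K"] K by auto
    next
      fix k assume "ts k \<le> x \<and> x < ts (Suc k)"
      then show "k = K" using idx[of k] idx[of "Suc k"] K by auto
    qed
    then show ?thesis using False K by (simp add: Phi_comp_fold)
  qed
  also have "\<dots> = fold (\<lambda>s. Phi_nu \<Phi> (\<rho> s)) (map ts [0..<?N]) \<mu>"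
    by (simp add: fold_map comp_def rep_basic(3)[OF r])
  also have "\<dots> = fold (\<lambda>s. Phi_nu \<Phi> (\<rho> s)) (filter (\<lambda>s. \<rho> s \<noteq> (\<lambda>_. False)) (map ts [0..<?N])) \<mu>"
    by (rule fold_filter_id[symmetric]) (auto simp: Phi_nu_zero)
  also have "filter (\<lambda>s. \<rho> s \<noteq> (\<lambda>_. False)) (map ts [0..<?N]) = sorted_list_of_set (supp \<rho> x)"
  proof (rule sls_eq[symmetric])
    show "sorted_wrt (<) (filter (\<lambda>s. \<rho> s \<noteq> (\<lambda>_. False)) (map ts [0..<?N]))"
    proof (rule sorted_wrt_filter)
      show "sorted_wrt (<) (map ts [0..<?N])" unfolding sorted_wrt_map
        by (rule sorted_wrt_mono_rel[of "[0..<?N]" "(<)" "\<lambda>x y. ts x < ts y", OF _ sorted_wrt_upt])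
           (use sm in \<open>simp add: strict_mono_def\<close>)
    qed
    show "set (filter (\<lambda>s. \<rho> s \<noteq> (\<lambda>_. False)) (map ts [0..<?N])) = supp \<rho> x"
      by (auto simp: supp_eq[OF r])
  qed
  finally show ?thesis by (simp add: G_def)
qed

lemma orbit_G:
  assumes "\<rho> \<in> P"
  shows "orbit \<Phi> \<rho> \<mu> x = G \<Phi> \<rho> \<mu> x"
proof -
  obtain p where p: "p = (SOME p. is_rep \<rho> (fst p) (snd p))" by blast
  have "\<exists>p. is_rep \<rho> (fst p) (snd p)" using assms by (auto simp: P_def)
  then have r: "is_rep \<rho> (fst p) (snd p)" unfolding p by (rule someI_ex)
  have "orbit \<Phi> \<rho> \<mu> x = (if x < snd p 0 then \<mu> else Phi_comp \<Phi> (fst p) (THE k. snd p k \<le> x \<and> x < snd p (Suc k)) \<mu>)"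
    unfolding orbit_def p[symmetric] by (cases p) simp
  also have "\<dots> = G \<Phi> \<rho> \<mu> x" by (rule orb_eq[OF r])
  finally show ?thesis .
qed

lemma lim_eq_iff: "lim_eq f v \<longleftrightarrow> (\<exists>T. \<forall>x\<ge>T. f x = v)"
  unfolding lim_eq_def by (metis order_refl)

lemma omega_lim:
  fixes f :: "real \<Rightarrow> 'a::finite"
  shows "{w. \<exists>s\<in>Seq. \<exists>K. \<forall>k\<ge>K. f (s k) = w} \<subseteq> {v} \<longleftrightarrow> lim_eq f v"
proof
  assume "lim_eq f v"
  then obtain T where T: "\<And>x. x \<ge> T \<Longrightarrow> f x = v" by (auto simp: lim_eq_iff)
  show "{w. \<exists>s\<in>Seq. \<exists>K. \<forall>k\<ge>K. f (s k) = w} \<subseteq> {v}"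
  proof
    fix w assume "w \<in> {w. \<exists>s\<in>Seq. \<exists>K. \<forall>k\<ge>K. f (s k) = w}"
    then obtain s K where s: "s \<in> Seq" and K: "\<And>k. k \<ge> K \<Longrightarrow> f (s k) = w" by auto
    from s obtain k0 where k0: "s k0 > T" and sm: "strict_mono s" by (auto simp: Seq_def)
    have "s (max K k0) \<ge> s k0" using sm by (simp add: strict_mono_less_eq)
    then have "f (s (max K k0)) = v" using k0 T by auto
    then show "w \<in> {v}" using K[of "max K k0"] by auto
  qed
next
  assume H: "{w. \<exists>s\<in>Seq. \<exists>K. \<forall>k\<ge>K. f (s k) = w} \<subseteq> {v}"
  show "lim_eq f v"
  proof (rule ccontr)
    assume nl: "\<not> lim_eq f v"
    have "\<exists>w. w \<noteq> v \<and> (\<forall>b. \<exists>t>b. f t = w)"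
    proof (rule ccontr)
      assume "\<not> ?thesis"
      then have "\<forall>w\<in>UNIV - {v}. \<exists>b. \<forall>t. f t = w \<longrightarrow> t \<le> b" by (auto simp: not_less)
      from bchoice[OF this] obtain b where b0: "\<forall>w\<in>UNIV - {v}. \<forall>t. f t = w \<longrightarrow> t \<le> b w" by blast
      then have b: "\<And>w t. w \<noteq> v \<Longrightarrow> f t = w \<Longrightarrow> t \<le> b w" by blast
      define T where "T = Max (insert 0 (b ` (UNIV - {v}))) + 1"
      have "\<And>x. x \<ge> T \<Longrightarrow> f x = v"
      proof (rule ccontr)
        fix x assume x: "x \<ge> T" "f x \<noteq> v"
        have "b (f x) \<le> Max (insert 0 (b ` (UNIV - {v})))" using x by (intro Max_ge) auto
        then show False using b[OF x(2) refl] x unfolding T_def by linarith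
      qed
      then show False using nl by (auto simp: lim_eq_iff)
    qed
    then obtain w where w: "w \<noteq> v" and wb: "\<And>b. \<exists>t>b. f t = w" by blast
    define g where "g b = (SOME t. t > b \<and> f t = w)" for b
    have g: "g b > b \<and> f (g b) = w" for b unfolding g_def using someI_ex[OF wb[of b]] .
    define s where "s k = rec_nat (g 0) (\<lambda>_ p. g (p + 1)) k" for k
    have s0: "s 0 = g 0" and sS: "s (Suc k) = g (s k + 1)" for k by (simp_all add: s_def)
    have fs: "f (s k) = w" for k by (cases k) (use g s0 sS in auto)
    have inc: "s k < s (Suc k)" for k using g[of "s k + 1"] sS[of k] by simp
    have gt: "s k > real k" for k
    proof (induction k)
      case 0 then show ?case using g[of 0] s0 by simp
    next
      case (Suc k) then show ?case using g[of "s k + 1"] sS[of k] by simp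
    qed
    have "s \<in> Seq" unfolding Seq_def
    proof (safe)
      show "strict_mono s" using inc by (simp add: strict_mono_Suc_iff)
      fix M :: real
      obtain n where "M < real n" using reals_Archimedean2 by blast
      then show "\<exists>k. M < s k" using gt[of n] by (meson less_trans)
    qed
    then have "w \<in> {w. \<exists>s\<in>Seq. \<exists>K. \<forall>k\<ge>K. f (s k) = w}" using fs by blast
    then show False using H w by blast
  qed
qed

lemma P_nonempty: "(\<lambda>x. if x \<in> range real then (\<lambda>_. True) else (\<lambda>_. False)) \<in> P"
proof -
  have "is_rep (\<lambda>x. if x \<in> range real then (\<lambda>_. True) else (\<lambda>_. False)) (\<lambda>_ _. True) real"
    unfolding is_rep_def progressive_def Seq_def
    by (auto simp: strict_mono_def reals_Archimedean2)
  then show ?thesis by (auto simp: P_def)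
qed

lemma splice:
  fixes \<rho>1 \<rho>2 :: "real \<Rightarrow> 'n state"
  assumes r1: "is_rep \<rho>1 \<alpha> ts" and r2: "is_rep \<rho>2 \<beta> us" and tc: "t < us 0 + c"
  defines "\<rho>3 \<equiv> (\<lambda>x. if x \<le> t then \<rho>1 x else \<rho>2 (x - c))"
  shows "\<rho>3 \<in> P" "\<And>x. x > t \<Longrightarrow> G \<Phi> \<rho>3 \<mu> x = G \<Phi> \<rho>2 (G \<Phi> \<rho>1 \<mu> t) (x - c)"
proof -
  let ?N = "LEAST k. t < ts k"
  have idx: "\<And>k. ts k \<le> t \<longleftrightarrow> k < ?N" using rep_idx[OF r1] by blast
  note b1 = rep_basic[OF r1] and b2 = rep_basic[OF r2]
  have us_ge: "us j \<ge> us 0" for j using b2(1) by (simp add: strict_mono_less_eq)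
  define ts3 where "ts3 k = (if k < ?N then ts k else us (k - ?N) + c)" for k
  define \<alpha>3 where "\<alpha>3 k = (if k < ?N then \<alpha> k else \<beta> (k - ?N))" for k
  have "is_rep \<rho>3 \<alpha>3 ts3" unfolding is_rep_def
  proof (intro conjI allI impI)
    show "progressive \<alpha>3" unfolding progressive_def
    proof
      fix i
      have "(\<lambda>j. j + ?N) ` {j. \<beta> j i} \<subseteq> {k. \<alpha>3 k i}" by (auto simp: \<alpha>3_def)
      moreover have "infinite ((\<lambda>j. j + ?N) ` {j. \<beta> j i})"
        using b2(5) by (auto simp: progressive_def dest!: finite_imageD simp: inj_on_def)
      ultimately show "infinite {k. \<alpha>3 k i}" using infinite_super by blast
    qed
    show "ts3 \<in> Seq" unfolding Seq_def
    proof (safe)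
      show "strict_mono ts3" unfolding strict_mono_Suc_iff
      proof
        fix k
        show "ts3 k < ts3 (Suc k)"
        proof (cases "Suc k < ?N")
          case True then show ?thesis using b1(1) by (simp add: ts3_def strict_mono_def)
        next
          case False
          show ?thesis
          proof (cases "k < ?N")
            case True
            then have "Suc k = ?N" using False by simp
            then show ?thesis using True idx[of k] tc by (simp add: ts3_def)
          next
            case False
            then have "Suc k - ?N = Suc (k - ?N)" by simp
            then show ?thesis using False b2(1) by (simp add: ts3_def strict_mono_def)
          qed
        qed
      qed
      fix M :: real
      obtain j where "M - c < us j" using b2(2) by blast
      then have "M < ts3 (j + ?N)" by (simp add: ts3_def)
      then show "\<exists>k. M < ts3 k" by blast
    qed
    fix k
    show "\<rho>3 (ts3 k) = \<alpha>3 k"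
    proof (cases "k < ?N")
      case True then show ?thesis using idx[of k] b1(3) by (simp add: ts3_def \<alpha>3_def \<rho>3_def)
    next
      case False
      have "ts3 k > t" using False tc us_ge[of "k - ?N"] by (simp add: ts3_def)
      then show ?thesis using False b2(3) by (simp add: ts3_def \<alpha>3_def \<rho>3_def)
    qed
  next
    fix x assume x: "x \<notin> range ts3"
    show "\<rho>3 x = (\<lambda>_. False)"
    proof (cases "x \<le> t")
      case True
      have "x \<notin> range ts"
      proof
        assume "x \<in> range ts" then obtain k where "x = ts k" by blast
        then have "k < ?N" "x = ts3 k" using idx[of k] True by (auto simp: ts3_def)
        then show False using x by blast
      qed
      then show ?thesis using True b1(4) by (simp add: \<rho>3_def)
    next
      case False
      have "x - c \<notin> range us"
      proof
        assume "x - c \<in> range us" then obtain j where "x - c = us j" by blast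
        then have "x = ts3 (j + ?N)" by (simp add: ts3_def)
        then show False using x by blast
      qed
      then show ?thesis using False b2(4) by (simp add: \<rho>3_def)
    qed
  qed
  then show "\<rho>3 \<in> P" by (auto simp: P_def)
  fix x assume xt: "x > t"
  let ?A = "sorted_list_of_set (supp \<rho>1 t)" and ?B = "sorted_list_of_set (supp \<rho>2 (x - c))"
  have f1: "finite (supp \<rho>1 t)" and f2: "finite (supp \<rho>2 (x - c))" using supp_fin r1 r2 by blast+
  have big: "z + c > t" if "z \<in> supp \<rho>2 (x - c)" for z
  proof -
    have "z \<in> range us" using that b2(4) by (auto simp: supp_def)
    then show ?thesis using us_ge tc by (auto, smt (verit) us_ge)
  qed
  have eq: "sorted_list_of_set (supp \<rho>3 x) = ?A @ map (\<lambda>z. z + c) ?B"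
  proof (rule sls_eq)
    show "sorted_wrt (<) (?A @ map (\<lambda>z. z + c) ?B)"
      unfolding sorted_wrt_append sorted_wrt_map
    proof (intro conjI ballI)
      show "sorted_wrt (<) ?A" by simp
      show "sorted_wrt (\<lambda>x y. x + c < y + c) ?B"
        by (rule sorted_wrt_mono_rel[OF _ strict_sorted_list_of_set]) auto
      fix a b assume a: "a \<in> set ?A" and b: "b \<in> set (map (\<lambda>z. z + c) ?B)"
      have "a \<le> t" using a f1 by (auto simp: supp_def)
      moreover have "b > t" using b f2 big by auto
      ultimately show "a < b" by simp
    qed
    show "set (?A @ map (\<lambda>z. z + c) ?B) = supp \<rho>3 x"
    proof
      show "set (?A @ map (\<lambda>z. z + c) ?B) \<subseteq> supp \<rho>3 x"
      proof
        fix s assume "s \<in> set (?A @ map (\<lambda>z. z + c) ?B)"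
        then consider "s \<in> supp \<rho>1 t" | z where "z \<in> supp \<rho>2 (x - c)" "s = z + c" using f1 f2 by auto
        then show "s \<in> supp \<rho>3 x"
        proof cases
          case 1 then show ?thesis using xt by (auto simp: supp_def \<rho>3_def)
        next
          case 2 then show ?thesis using big[OF 2(1)] by (auto simp: supp_def \<rho>3_def)
        qed
      qed
      show "supp \<rho>3 x \<subseteq> set (?A @ map (\<lambda>z. z + c) ?B)"
      proof
        fix s assume s: "s \<in> supp \<rho>3 x"
        show "s \<in> set (?A @ map (\<lambda>z. z + c) ?B)"
        proof (cases "s \<le> t")
          case True then show ?thesis using s f1 by (auto simp: supp_def \<rho>3_def)
        next
          case False
          then have "s - c \<in> supp \<rho>2 (x - c)" using s by (auto simp: supp_def \<rho>3_def)
          then have "s - c \<in> set ?B" using f2 by simp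
          then show ?thesis by (auto intro!: image_eqI[of s _ "s - c"])
        qed
      qed
    qed
  qed
  have "G \<Phi> \<rho>3 \<mu> x = fold (\<lambda>s. Phi_nu \<Phi> (\<rho>3 s)) (map (\<lambda>z. z + c) ?B)
                          (fold (\<lambda>s. Phi_nu \<Phi> (\<rho>3 s)) ?A \<mu>)"
    by (simp add: G_def eq)
  also have "fold (\<lambda>s. Phi_nu \<Phi> (\<rho>3 s)) ?A \<mu> = G \<Phi> \<rho>1 \<mu> t"
    unfolding G_def by (rule fold_cong) (use f1 in \<open>auto simp: supp_def \<rho>3_def\<close>)
  also have "fold (\<lambda>s. Phi_nu \<Phi> (\<rho>3 s)) (map (\<lambda>z. z + c) ?B) (G \<Phi> \<rho>1 \<mu> t)
       = G \<Phi> \<rho>2 (G \<Phi> \<rho>1 \<mu> t) (x - c)"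
    unfolding G_def fold_map
  proof (rule fold_cong)
    fix z assume "z \<in> set ?B"
    then have "z \<in> supp \<rho>2 (x - c)" using f2 by simp
    then have "\<not> z + c \<le> t" using big by (simp add: not_le)
    then show "((\<lambda>s. Phi_nu \<Phi> (\<rho>3 s)) \<circ> (\<lambda>z. z + c)) z = Phi_nu \<Phi> (\<rho>2 z)"
      by (simp add: \<rho>3_def)
  qed simp_all
  finally show "G \<Phi> \<rho>3 \<mu> x = G \<Phi> \<rho>2 (G \<Phi> \<rho>1 \<mu> t) (x - c)" .
qed

lemma tail:
  assumes r: "is_rep \<rho> \<alpha> ts"
  shows "is_rep (\<lambda>x. if t < x then \<rho> x else (\<lambda>_. False)) (\<lambda>j. \<alpha> (j + (LEAST k. t < ts k)))
           (\<lambda>j. ts (j + (LEAST k. t < ts k)))" (is "is_rep ?r ?a ?u")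
proof -
  let ?N = "LEAST k. t < ts k"
  have idx: "\<And>k. ts k \<le> t \<longleftrightarrow> k < ?N" using rep_idx[OF r] by blast
  note b = rep_basic[OF r]
  show ?thesis unfolding is_rep_def
  proof (intro conjI allI impI)
    show "progressive ?a" unfolding progressive_def
    proof
      fix i
      have "{k. \<alpha> k i} \<subseteq> {..<?N} \<union> (\<lambda>j. j + ?N) ` {j. \<alpha> (j + ?N) i}"
        by (auto simp: image_iff) (metis le_add_diff_inverse2 not_less)
      moreover have "infinite {k. \<alpha> k i}" using b(5) by (auto simp: progressive_def)
      ultimately show "infinite {j. \<alpha> (j + ?N) i}" by (meson finite_Un finite_imageI finite_lessThan finite_subset)
    qed
    show "?u \<in> Seq" unfolding Seq_def
    proof safe
      show "strict_mono ?u" using b(1) by (simp add: strict_mono_def)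
      fix M :: real
      obtain k where "M < ts k" using b(2) by blast
      moreover have "ts k \<le> ts (k + ?N)" using b(1) by (simp add: strict_mono_less_eq)
      ultimately show "\<exists>j. M < ts (j + ?N)" by (meson less_le_trans)
    qed
    fix j
    show "?r (?u j) = ?a j" using idx[of "j + ?N"] b(3) by auto
  next
    fix x assume x: "x \<notin> range ?u"
    show "?r x = (\<lambda>_. False)"
    proof (cases "t < x")
      case True
      have "x \<notin> range ts"
      proof
        assume "x \<in> range ts" then obtain k where k: "x = ts k" by blast
        then have "\<not> k < ?N" using idx[of k] True by auto
        then have "x = ?u (k - ?N)" using k by simp
        then show False using x by blast
      qed
      then show ?thesis using b(4) True by simp
    qed simp
  qed
qed

theorem theorem45:
  fixes \<Phi> :: "('n::finite) state \<Rightarrow> 'n state" and \<mu> :: "'n state"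
  assumes "\<Phi> \<mu> = \<mu>"
  shows "Wbar \<Phi> \<mu> = {\<mu>'. \<exists>\<rho>'\<in>P. lim_eq (orbit \<Phi> \<rho>' \<mu>') \<mu>}
       \<and> Wund \<Phi> \<mu> = {\<mu>'. \<forall>\<rho>'\<in>P. lim_eq (orbit \<Phi> \<rho>' \<mu>') \<mu>}
       \<and> {\<mu>} \<subseteq> Wund \<Phi> \<mu> \<and> Wund \<Phi> \<mu> \<subseteq> Wbar \<Phi> \<mu>
       \<and> p_attractive \<Phi> \<mu> \<and> n_attractive \<Phi> \<mu>
       \<and> p_invariant \<Phi> (Wbar \<Phi> \<mu>) \<and> n_invariant \<Phi> (Wund \<Phi> \<mu>)"
proof -
  have om: "omega \<Phi> \<rho> \<nu> \<subseteq> {\<mu>} \<longleftrightarrow> lim_eq (orbit \<Phi> \<rho> \<nu>) \<mu>" for \<rho> \<nu>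
    unfolding omega_def by (rule omega_lim)
  have A: "Wbar \<Phi> \<mu> = {\<mu>'. \<exists>\<rho>'\<in>P. lim_eq (orbit \<Phi> \<rho>' \<mu>') \<mu>}"
    unfolding Wbar_def om ..
  have B: "Wund \<Phi> \<mu> = {\<mu>'. \<forall>\<rho>'\<in>P. lim_eq (orbit \<Phi> \<rho>' \<mu>') \<mu>}"
    unfolding Wund_def om ..
  have mu: "\<mu> \<in> Wund \<Phi> \<mu>"
  proof -
    have "orbit \<Phi> \<rho> \<mu> x = \<mu>" for \<rho> x
      unfolding orbit_def using Phi_comp_fix[of \<Phi> \<mu>, OF assms] by (auto split: prod.split)
    then show ?thesis unfolding B by (auto simp: lim_eq_iff)
  qed
  have sub: "Wund \<Phi> \<mu> \<subseteq> Wbar \<Phi> \<mu>" unfolding A B using P_nonempty by blast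
  have pinv: "p_invariant \<Phi> (Wbar \<Phi> \<mu>)" unfolding p_invariant_def
  proof (intro conjI ballI)
    show "Wbar \<Phi> \<mu> \<noteq> {}" using mu sub by blast
    fix \<mu>' assume "\<mu>' \<in> Wbar \<Phi> \<mu>"
    then obtain \<rho> where rP: "\<rho> \<in> P" and lim: "lim_eq (orbit \<Phi> \<rho> \<mu>') \<mu>" unfolding A by blast
    then obtain \<alpha> ts where r: "is_rep \<rho> \<alpha> ts" by (auto simp: P_def)
    obtain T where T: "\<And>x. x \<ge> T \<Longrightarrow> G \<Phi> \<rho> \<mu>' x = \<mu>" using lim by (auto simp: lim_eq_iff orbit_G[OF rP])
    show "\<exists>\<rho>\<in>P. Or \<Phi> \<rho> \<mu>' \<subseteq> Wbar \<Phi> \<mu>"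
    proof (intro bexI[OF _ rP] subsetI)
      fix \<nu> assume "\<nu> \<in> Or \<Phi> \<rho> \<mu>'"
      then obtain t where \<nu>: "\<nu> = G \<Phi> \<rho> \<mu>' t" by (auto simp: Or_def orbit_G[OF rP])
      let ?r2 = "\<lambda>x. if t < x then \<rho> x else (\<lambda>_. False)"
      have r2: "is_rep ?r2 (\<lambda>j. \<alpha> (j + (LEAST k. t < ts k))) (\<lambda>j. ts (j + (LEAST k. t < ts k)))"
        by (rule tail[OF r])
      have tc: "t < ts (0 + (LEAST k. t < ts k)) + 0"
        using rep_idx[OF r, of "LEAST k. t < ts k" t] by simp
      have e: "(\<lambda>x. if x \<le> t then \<rho> x else ?r2 (x - 0)) = \<rho>" by (auto simp: fun_eq_iff)
      have "\<And>x. x > t \<Longrightarrow> G \<Phi> \<rho> \<mu>' x = G \<Phi> ?r2 \<nu> x"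
        using splice(2)[OF r r2 tc, of _ \<Phi> \<mu>'] unfolding e \<nu> by simp
      have r2P: "?r2 \<in> P" using r2 by (auto simp: P_def)
      have "\<forall>x\<ge>max T (t + 1). orbit \<Phi> ?r2 \<nu> x = \<mu>"
        using T \<open>\<And>x. x > t \<Longrightarrow> G \<Phi> \<rho> \<mu>' x = G \<Phi> ?r2 \<nu> x\<close> orbit_G[OF r2P] by force
      then have "lim_eq (orbit \<Phi> ?r2 \<nu>) \<mu>" unfolding lim_eq_iff by blast
      then show "\<nu> \<in> Wbar \<Phi> \<mu>" unfolding A using r2P by blast
    qed
  qed
  have ninv: "n_invariant \<Phi> (Wund \<Phi> \<mu>)" unfolding n_invariant_def
  proof (intro conjI ballI)
    show "Wund \<Phi> \<mu> \<noteq> {}" using mu by blast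
    fix \<mu>' :: "'n state" and \<rho>1 :: "real \<Rightarrow> 'n state" assume mu': "\<mu>' \<in> Wund \<Phi> \<mu>" and r1P: "\<rho>1 \<in> P"
    then obtain \<alpha> ts where r1: "is_rep \<rho>1 \<alpha> ts" by (auto simp: P_def)
    show "Or \<Phi> \<rho>1 \<mu>' \<subseteq> Wund \<Phi> \<mu>"
    proof
      fix \<nu> assume "\<nu> \<in> Or \<Phi> \<rho>1 \<mu>'"
      then obtain t where \<nu>: "\<nu> = G \<Phi> \<rho>1 \<mu>' t" by (auto simp: Or_def orbit_G[OF r1P])
      show "\<nu> \<in> Wund \<Phi> \<mu>" unfolding B
      proof (intro CollectI ballI)
        fix \<rho>2 :: "real \<Rightarrow> 'n state" assume r2P: "\<rho>2 \<in> P"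
        then obtain \<beta> us where r2: "is_rep \<rho>2 \<beta> us" by (auto simp: P_def)
        define c where "c = t - us 0 + 1"
        have tc: "t < us 0 + c" by (simp add: c_def)
        let ?r3 = "\<lambda>x. if x \<le> t then \<rho>1 x else \<rho>2 (x - c)"
        have r3P: "?r3 \<in> P" using splice(1)[OF r1 r2 tc] by simp
        have eqG: "\<And>x. x > t \<Longrightarrow> G \<Phi> ?r3 \<mu>' x = G \<Phi> \<rho>2 \<nu> (x - c)"
          using splice(2)[OF r1 r2 tc, of _ \<Phi> \<mu>'] unfolding \<nu> by simp
        have "lim_eq (orbit \<Phi> ?r3 \<mu>') \<mu>" using mu' r3P unfolding B by blast
        then obtain T where T: "\<And>x. x \<ge> T \<Longrightarrow> G \<Phi> ?r3 \<mu>' x = \<mu>" by (auto simp: lim_eq_iff orbit_G[OF r3P])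
        have "\<forall>y\<ge>max (T - c) (t + 1 - c). orbit \<Phi> \<rho>2 \<nu> y = \<mu>"
        proof (intro allI impI)
          fix y assume y: "y \<ge> max (T - c) (t + 1 - c)"
          then have "G \<Phi> \<rho>2 \<nu> y = G \<Phi> ?r3 \<mu>' (y + c)" using eqG[of "y + c"] by simp
          also have "\<dots> = \<mu>" using T y by simp
          finally show "orbit \<Phi> \<rho>2 \<nu> y = \<mu>" by (simp add: orbit_G[OF r2P])
        qed
        then show "lim_eq (orbit \<Phi> \<rho>2 \<nu>) \<mu>" unfolding lim_eq_iff by blast
      qed
    qed
  qed
  have pa: "p_attractive \<Phi> \<mu>" using mu sub unfolding p_attractive_def by blast
  have na: "n_attractive \<Phi> \<mu>" using mu unfolding n_attractive_def by blast
  have s1: "{\<mu>} \<subseteq> Wund \<Phi> \<mu>" using mu by simp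
  show ?thesis by (intro conjI A B s1 sub pa na pinv ninv)
qed

end
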